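(* Let $\mu\in(0,1/2)$ and $\varepsilon\in(0,1)$. If $u(f)$ is a solution of the Euler–Lagrange equations of the modified Lagrangian $\mathcal{L}(u,u',f)$ defined below, with initial data $u(0),u'(0)$ satisfying $u(0)\neq 0$ and $l(u(0),u'(0))=0$, then $u(f)$ is also a solution of the Euler–Lagrange equations of $\mathscr{L}(u,u',f)$ (defined below), as long as $u(f)\neq 0$.
   Context: Primes denote derivatives with respect to $f\in\mathbb{R}$. For $q\in\mathbb{R}^3\setminus\{0,(-1,0,0)\}$, $q'\in\mathbb{R}^3$, let $$\widetilde{L}(q,q',f)=\tfrac12\|q'\|^2+q_1q_2'-q_2q_1'+\frac{1}{1+\varepsilon\cos f}\Big[(1-\mu)\Big(\frac{1}{\|q+(1,0,0)\|}+q_1\Big)+\frac{\mu}{\|q\|}+\tfrac12\big(q_1^2+q_2^2-q_3^2\varepsilon\cos f\big)\Big].$$ Let $\pi:\mathbb{R}^4\to\mathbb{R}^3$, $\pi(u)=(u_1^2-u_2^2-u_3^2+u_4^2,\;2u_1u_2-2u_3u_4,\;2u_1u_3+2u_2u_4)$ (the Kustaanheimo–Stiefel map). Define $\mathscr{L}(u,u',f)=\widetilde{L}\big(\pi(u),\tfrac{\partial\pi}{\partial u}(u)u',f\big)$, the bilinear form $l(u,u')=u_4u_1'-u_3u_2'+u_2u_3'-u_1u_4'$, and the modified Lagrangian $\mathcal{L}(u,u',f)=\mathscr{L}(u,u',f)+2\,l(u,u')^2$. *)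

theory Defs
  imports "HOL-Analysis.Analysis"
begin

text \<open>The Lagrangian \<open>L~(q,q',f)\<close> of the restricted three-body problem in rotating-pulsating
  coordinates, with parameters mu and eps.\<close>
definition Ltilde :: "real \<Rightarrow> real \<Rightarrow> real^3 \<Rightarrow> real^3 \<Rightarrow> real \<Rightarrow> real" where
  "Ltilde mu eps q q' f =
     (1/2) * (norm q')^2 + q$1 * q'$2 - q$2 * q'$1
     + (1 / (1 + eps * cos f)) *
       ((1 - mu) * (1 / norm (q + vector [1, 0, 0]) + q$1) + mu / norm q
        + (1/2) * ((q$1)^2 + (q$2)^2 - (q$3)^2 * eps * cos f))"

definition KS :: "real^4 \<Rightarrow> real^3" where
  "KS u = vector [ (u$1)^2 - (u$2)^2 - (u$3)^2 + (u$4)^2,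
                   2 * u$1 * u$2 - 2 * u$3 * u$4,
                   2 * u$1 * u$3 + 2 * u$2 * u$4 ]"

definition KS_jac :: "real^4 \<Rightarrow> real^4 \<Rightarrow> real^3" where
  "KS_jac u v = vector [ 2 * u$1 * v$1 - 2 * u$2 * v$2 - 2 * u$3 * v$3 + 2 * u$4 * v$4,
                         2 * v$1 * u$2 + 2 * u$1 * v$2 - 2 * v$3 * u$4 - 2 * u$3 * v$4,
                         2 * v$1 * u$3 + 2 * u$1 * v$3 + 2 * v$2 * u$4 + 2 * u$2 * v$4 ]"

definition Lscript :: "real \<Rightarrow> real \<Rightarrow> real^4 \<Rightarrow> real^4 \<Rightarrow> real \<Rightarrow> real" where
  "Lscript mu eps u v f = Ltilde mu eps (KS u) (KS_jac u v) f"

definition bil :: "real^4 \<Rightarrow> real^4 \<Rightarrow> real" where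
  "bil u v = u$4 * v$1 - u$3 * v$2 + u$2 * v$3 - u$1 * v$4"

definition Lmod :: "real \<Rightarrow> real \<Rightarrow> real^4 \<Rightarrow> real^4 \<Rightarrow> real \<Rightarrow> real" where
  "Lmod mu eps u v f = Lscript mu eps u v f + 2 * (bil u v)^2"

definition pd_x :: "(real^4 \<Rightarrow> real^4 \<Rightarrow> real \<Rightarrow> real) \<Rightarrow> 4 \<Rightarrow> real^4 \<Rightarrow> real^4 \<Rightarrow> real \<Rightarrow> real" where
  "pd_x L i x v t = deriv (\<lambda>s. L (x + s *\<^sub>R axis i 1) v t) 0"

definition pd_v :: "(real^4 \<Rightarrow> real^4 \<Rightarrow> real \<Rightarrow> real) \<Rightarrow> 4 \<Rightarrow> real^4 \<Rightarrow> real^4 \<Rightarrow> real \<Rightarrow> real" where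
  "pd_v L i x v t = deriv (\<lambda>s. L x (v + s *\<^sub>R axis i 1) t) 0"

definition EL_solution :: "(real^4 \<Rightarrow> real^4 \<Rightarrow> real \<Rightarrow> real) \<Rightarrow> real set \<Rightarrow> (real \<Rightarrow> real^4) \<Rightarrow> bool" where
  "EL_solution L I u \<longleftrightarrow>
     (\<forall>t\<in>I. u differentiable at t \<and> (\<lambda>s. vector_derivative u (at s)) differentiable at t) \<and>
     (\<forall>t\<in>I. \<forall>i. ((\<lambda>s. pd_v L i (u s) (vector_derivative u (at s)) s)
                     has_real_derivative pd_x L i (u t) (vector_derivative u (at t)) t) (at t))"

end

theory Submission
  imports Defs
begin

lemma vec3_expand: "(vector [a,b,c] :: real^3) = a *\<^sub>R axis 1 1 + b *\<^sub>R axis 2 1 + c *\<^sub>R axis 3 1"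
  by (simp add: vec_eq_iff forall_3 axis_def)

lemma comp_diff [simp, derivative_intros]: "(\<lambda>p::(real^4) \<times> (real^4). fst p $ i) differentiable at a"
  "(\<lambda>p::(real^4) \<times> (real^4). snd p $ i) differentiable at a"
  by (auto intro!: bounded_linear_imp_differentiable bounded_linear_compose[OF bounded_linear_vec_nth] bounded_linear_fst bounded_linear_snd)

lemma KS_diff: "(\<lambda>p::(real^4) \<times> (real^4). KS (fst p)) differentiable at a"
  unfolding KS_def vec3_expand by (intro derivative_intros)

lemma KSJ_diff: "(\<lambda>p::(real^4) \<times> (real^4). KS_jac (fst p) (snd p)) differentiable at a"
  unfolding KS_jac_def vec3_expand by (intro derivative_intros)

lemma Lscript_diff:
  assumes "KS x \<noteq> 0" "KS x \<noteq> vector [-1,0,0]"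
  shows "(\<lambda>p. Lscript mu eps (fst p) (snd p) t) differentiable at (x,v)"
proof -
  have n1: "KS x + vector [1,0,0] \<noteq> 0"
  proof
    assume "KS x + vector [1,0,0] = 0"
    then have "KS x = - vector [1,0,0]" by (simp add: eq_neg_iff_add_eq_0)
    moreover have "- vector [1,0,0] = (vector [-1,0,0] :: real^3)" by (simp add: vec_eq_iff forall_3)
    ultimately show False using assms(2) by simp
  qed
  have d1: "(\<lambda>p::(real^4) \<times> (real^4). norm (KS (fst p) + vector [1,0,0])) differentiable at (x,v)"
    by (rule differentiable_compose[where f=norm]) (auto simp: n1 intro!: derivative_intros KS_diff)
  have d2: "(\<lambda>p::(real^4) \<times> (real^4). norm (KS (fst p))) differentiable at (x,v)"
    by (rule differentiable_compose[where f=norm]) (auto simp: assms intro!: derivative_intros KS_diff)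
  have d3: "(\<lambda>p::(real^4) \<times> (real^4). (norm (KS_jac (fst p) (snd p)))^2) differentiable at (x,v)"
    unfolding power2_norm_eq_inner by (intro differentiable_inner KSJ_diff)
  have d4: "(\<lambda>p::(real^4) \<times> (real^4). KS (fst p) $ i) differentiable at (x,v)" for i
    by (rule differentiable_compose[where f="\<lambda>q. q $ i"]) (auto intro!: bounded_linear_imp_differentiable KS_diff)
  have d5: "(\<lambda>p::(real^4) \<times> (real^4). KS_jac (fst p) (snd p) $ i) differentiable at (x,v)" for i
    by (rule differentiable_compose[where f="\<lambda>q. q $ i"]) (auto intro!: bounded_linear_imp_differentiable KSJ_diff)
  show ?thesis unfolding Lscript_def Ltilde_def
    by (intro derivative_intros d1 d2 d3 d4 d5) (auto simp: n1 assms)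
qed

lemma pd_frechet:
  fixes L :: "real^4 \<Rightarrow> real^4 \<Rightarrow> real \<Rightarrow> real"
  assumes D: "((\<lambda>p. L (fst p) (snd p) t) has_derivative D) (at (x,v))"
  shows "pd_x L i x v t = D (axis i 1, 0)" "pd_v L i x v t = D (0, axis i 1)"
proof -
  have lin: "linear D" using D has_derivative_linear by blast
  have h1: "((\<lambda>s::real. (x + s *\<^sub>R axis i 1, v)) has_derivative (\<lambda>h. h *\<^sub>R (axis i 1, 0))) (at 0)"
    by (auto intro!: derivative_eq_intros)
  have "((\<lambda>s::real. L (fst (x + s *\<^sub>R axis i 1, v)) (snd (x + s *\<^sub>R axis i 1, v)) t) has_derivative (\<lambda>h. D (h *\<^sub>R (axis i 1, 0)))) (at 0)"
    by (rule has_derivative_compose[OF h1]) (simp add: D)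
  then have "((\<lambda>s::real. L (x + s *\<^sub>R axis i 1) v t) has_derivative (\<lambda>h. D (h *\<^sub>R axis i 1, 0))) (at 0)"
    by simp
  moreover have "(\<lambda>h. D (h *\<^sub>R axis i 1, 0)) = (*) (D (axis i 1, 0))"
    using linear_scale[OF lin, of _ "(axis i 1, 0)"] by (auto simp: fun_eq_iff)
  ultimately have "((\<lambda>s::real. L (x + s *\<^sub>R axis i 1) v t) has_field_derivative D (axis i 1, 0)) (at 0)"
    by (simp add: has_field_derivative_def)
  then show "pd_x L i x v t = D (axis i 1, 0)" unfolding pd_x_def by (rule DERIV_imp_deriv)
  have h2: "((\<lambda>s::real. (x, v + s *\<^sub>R axis i 1)) has_derivative (\<lambda>h. h *\<^sub>R (0, axis i 1))) (at 0)"
    by (auto intro!: derivative_eq_intros)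
  have "((\<lambda>s::real. L (fst (x, v + s *\<^sub>R axis i 1)) (snd (x, v + s *\<^sub>R axis i 1)) t) has_derivative (\<lambda>h. D (h *\<^sub>R (0, axis i 1)))) (at 0)"
    by (rule has_derivative_compose[OF h2]) (simp add: D)
  then have "((\<lambda>s::real. L x (v + s *\<^sub>R axis i 1) t) has_derivative (\<lambda>h. D (0, h *\<^sub>R axis i 1))) (at 0)"
    by simp
  moreover have "(\<lambda>h. D (0, h *\<^sub>R axis i 1)) = (*) (D (0, axis i 1))"
    using linear_scale[OF lin, of _ "(0, axis i 1)"] by (auto simp: fun_eq_iff)
  ultimately have "((\<lambda>s::real. L x (v + s *\<^sub>R axis i 1) t) has_field_derivative D (0, axis i 1)) (at 0)"
    by (simp add: has_field_derivative_def)
  then show "pd_v L i x v t = D (0, axis i 1)" unfolding pd_v_def by (rule DERIV_imp_deriv)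
qed

lemma lin_expand:
  assumes "linear (D :: (real^4) \<times> (real^4) \<Rightarrow> real)"
  shows "D (a, b) = (\<Sum>i\<in>UNIV. a $ i * D (axis i 1, 0) + b $ i * D (0, axis i 1))"
proof -
  have "(a, b) = (\<Sum>i\<in>UNIV. a $ i *\<^sub>R (axis i 1, 0) + b $ i *\<^sub>R (0, axis i 1))"
    by (simp add: sum_4 prod_eq_iff vec_eq_iff forall_4 axis_def)
  then have "D (a, b) = D (\<Sum>i\<in>UNIV. a $ i *\<^sub>R (axis i 1, 0) + b $ i *\<^sub>R (0, axis i 1))" by metis
  also have "\<dots> = (\<Sum>i\<in>UNIV. a $ i * D (axis i 1, 0) + b $ i * D (0, axis i 1))"
    by (simp only: linear_sum[OF assms] linear_add[OF assms] linear_scale[OF assms] real_scaleR_def)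
  finally show ?thesis .
qed

definition Jb :: "real^4 \<Rightarrow> real^4" where "Jb x = (\<chi> i. bil x (axis i 1))"

lemma Jb_nth: "Jb x $ i = bil x (axis i 1)" by (simp add: Jb_def)

lemma Jb_comp: "Jb x $ 1 = x $ 4" "Jb x $ 2 = - x $ 3" "Jb x $ 3 = x $ 2" "Jb x $ 4 = - x $ 1"
  by (simp_all add: Jb_def bil_def axis_def)

definition Rot :: "real \<Rightarrow> real^4 \<Rightarrow> real^4" where "Rot th x = cos th *\<^sub>R x + sin th *\<^sub>R Jb x"

lemma Rot_inv:
  "KS (Rot th x) = KS x" "KS_jac (Rot th x) (Rot th v) = KS_jac x v" "bil (Rot th x) (Rot th v) = bil x v"
proof -
  have cs: "(cos th)^2 + (sin th)^2 = 1" by simp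
  show "KS (Rot th x) = KS x"
    unfolding KS_def Rot_def by (simp add: vec_eq_iff forall_3 Jb_comp; use cs in algebra)
  show "KS_jac (Rot th x) (Rot th v) = KS_jac x v"
    unfolding KS_jac_def Rot_def by (simp add: vec_eq_iff forall_3 Jb_comp; use cs in algebra)
  show "bil (Rot th x) (Rot th v) = bil x v"
    unfolding bil_def Rot_def by (simp add: Jb_comp; use cs in algebra)
qed

lemma KSJ_degen: "KS_jac x (v + s *\<^sub>R Jb x) = KS_jac x v"
  unfolding KS_jac_def by (simp add: vec_eq_iff forall_3 Jb_comp algebra_simps)

lemma KS_nz: assumes "x \<noteq> 0" shows "KS x \<noteq> 0"
proof
  assume "KS x = 0"
  then have e: "(x$1)^2 - (x$2)^2 - (x$3)^2 + (x$4)^2 = 0" "2 * x$1 * x$2 - 2 * x$3 * x$4 = 0"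
     "2 * x$1 * x$3 + 2 * x$2 * x$4 = 0"
    unfolding KS_def by (simp_all add: vec_eq_iff forall_3)
  have "((x$1)^2 + (x$2)^2 + (x$3)^2 + (x$4)^2)^2 = ((x$1)^2 - (x$2)^2 - (x$3)^2 + (x$4)^2)^2
     + (2 * x$1 * x$2 - 2 * x$3 * x$4)^2 + (2 * x$1 * x$3 + 2 * x$2 * x$4)^2"
    by algebra
  then have s0: "(x$1)^2 + (x$2)^2 + (x$3)^2 + (x$4)^2 = 0" using e by simp
  then have "x$1 = 0 \<and> x$2 = 0 \<and> x$3 = 0 \<and> x$4 = 0"
  proof -
    have "(x$1)^2 \<ge> 0" "(x$2)^2 \<ge> 0" "(x$3)^2 \<ge> 0" "(x$4)^2 \<ge> 0" by simp_all
    then have "(x$1)^2 = 0" "(x$2)^2 = 0" "(x$3)^2 = 0" "(x$4)^2 = 0" using s0 by linarith+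
    then show ?thesis by simp
  qed
  then have "x = 0" by (simp add: vec_eq_iff forall_4)
  then show False using assms by simp
qed

lemma comp_hd: "((\<lambda>p::(real^4) \<times> (real^4). fst p $ i) has_derivative (\<lambda>h. fst h $ i)) F"
  "((\<lambda>p::(real^4) \<times> (real^4). snd p $ i) has_derivative (\<lambda>h. snd h $ i)) F"
  by (auto intro!: bounded_linear_imp_has_derivative bounded_linear_compose[OF bounded_linear_vec_nth] bounded_linear_fst bounded_linear_snd)

lemma const_deriv_zero:
  assumes "(f has_derivative D) (at (0::real))" "\<And>s. f s = c"
  shows "D 1 = 0"
proof -
  have "f = (\<lambda>_. c)" using assms(2) by auto
  then have "(f has_derivative (\<lambda>h. 0)) (at 0)" by (simp add: has_derivative_const)
  then have "D = (\<lambda>h. 0)" using has_derivative_unique assms(1) by blast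
  then show ?thesis by simp
qed

lemma key:
  assumes "x \<noteq> 0" "KS x \<noteq> vector [-1,0,0]"
  shows "pd_v (Lmod mu eps) i x v t = pd_v (Lscript mu eps) i x v t + 4 * bil x v * Jb x $ i"
   and "pd_x (Lmod mu eps) i x v t = pd_x (Lscript mu eps) i x v t + 4 * bil x v * bil (axis i 1) v"
   and "(\<Sum>i\<in>UNIV. pd_v (Lscript mu eps) i x v t * Jb x $ i) = 0"
   and "(\<Sum>i\<in>UNIV. pd_x (Lmod mu eps) i x v t * Jb x $ i + pd_v (Lmod mu eps) i x v t * Jb v $ i) = 0"
proof -
  obtain Ds where Ds: "((\<lambda>p. Lscript mu eps (fst p) (snd p) t) has_derivative Ds) (at (x,v))"
    using Lscript_diff[OF KS_nz[OF assms(1)] assms(2)] unfolding differentiable_def by blast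
  have linS: "linear Ds" using Ds has_derivative_linear by blast
  define Dg where "Dg h = 4 * bil x v * (bil (fst h) v + bil x (snd h))" for h :: "(real^4) \<times> (real^4)"
  have G: "((\<lambda>p. 2 * (bil (fst p) (snd p))^2) has_derivative Dg) (at (x,v))"
    unfolding Dg_def bil_def
    by (auto intro!: derivative_eq_intros comp_hd simp: fun_eq_iff algebra_simps power2_eq_square)
  have Dm: "((\<lambda>p. Lmod mu eps (fst p) (snd p) t) has_derivative (\<lambda>h. Ds h + Dg h)) (at (x,v))"
    unfolding Lmod_def by (intro has_derivative_add Ds G)
  have linM: "linear (\<lambda>h. Ds h + Dg h)" using Dm has_derivative_linear by blast
  have b0: "bil 0 w = 0" "bil w 0 = 0" for w by (simp_all add: bil_def)
  show "pd_v (Lmod mu eps) i x v t = pd_v (Lscript mu eps) i x v t + 4 * bil x v * Jb x $ i"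
    using pd_frechet(2)[where L="Lscript mu eps", OF Ds] pd_frechet(2)[where L="Lmod mu eps", OF Dm] by (simp add: Dg_def b0 Jb_nth)
  show "pd_x (Lmod mu eps) i x v t = pd_x (Lscript mu eps) i x v t + 4 * bil x v * bil (axis i 1) v"
    using pd_frechet(1)[where L="Lscript mu eps", OF Ds] pd_frechet(1)[where L="Lmod mu eps", OF Dm] by (simp add: Dg_def b0)
  have h2: "((\<lambda>s::real. (x, v + s *\<^sub>R Jb x)) has_derivative (\<lambda>h. h *\<^sub>R (0, Jb x))) (at 0)"
    by (auto intro!: derivative_eq_intros)
  have "((\<lambda>s::real. Lscript mu eps (fst (x, v + s *\<^sub>R Jb x)) (snd (x, v + s *\<^sub>R Jb x)) t) has_derivative (\<lambda>h. Ds (h *\<^sub>R (0, Jb x)))) (at 0)"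
    by (rule has_derivative_compose[OF h2]) (simp add: Ds)
  then have "Ds (1 *\<^sub>R (0, Jb x)) = 0"
    by (rule const_deriv_zero[where c="Lscript mu eps x v t", simplified]) (simp add: Lscript_def KSJ_degen)
  then have "Ds (0, Jb x) = 0" by simp
  then show "(\<Sum>i\<in>UNIV. pd_v (Lscript mu eps) i x v t * Jb x $ i) = 0"
    using lin_expand[OF linS, of 0 "Jb x"] pd_frechet(2)[where L="Lscript mu eps", OF Ds] by (simp add: mult.commute)
  have h3: "((\<lambda>s::real. (Rot s x, Rot s v)) has_derivative (\<lambda>h. h *\<^sub>R (Jb x, Jb v))) (at 0)"
    unfolding Rot_def by (auto intro!: derivative_eq_intros simp: fun_eq_iff)
  have "((\<lambda>s::real. Lmod mu eps (fst (Rot s x, Rot s v)) (snd (Rot s x, Rot s v)) t) has_derivative (\<lambda>h. Ds (h *\<^sub>R (Jb x, Jb v)) + Dg (h *\<^sub>R (Jb x, Jb v)))) (at 0)"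
    by (rule has_derivative_compose[OF h3]) (simp add: Dm Rot_def)
  then have "Ds (1 *\<^sub>R (Jb x, Jb v)) + Dg (1 *\<^sub>R (Jb x, Jb v)) = 0"
    by (rule const_deriv_zero[where c="Lmod mu eps x v t", simplified]) (simp add: Lmod_def Lscript_def Rot_inv)
  then have "Ds (Jb x, Jb v) + Dg (Jb x, Jb v) = 0" by simp
  then show "(\<Sum>i\<in>UNIV. pd_x (Lmod mu eps) i x v t * Jb x $ i + pd_v (Lmod mu eps) i x v t * Jb v $ i) = 0"
    using lin_expand[OF linM, of "Jb x" "Jb v"] pd_frechet[where L="Lmod mu eps", OF Dm] by (simp add: mult.commute)
qed

lemma Jb_bl: "bounded_linear (\<lambda>y. Jb y $ i)"
proof -
  have "i = 1 \<or> i = 2 \<or> i = 3 \<or> i = 4" using exhaust_4 by blast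
  then show ?thesis
    by (auto simp: Jb_comp intro!: bounded_linear_vec_nth bounded_linear_minus[OF bounded_linear_vec_nth])
qed

lemma Jb_sq: "x \<noteq> 0 \<Longrightarrow> (\<Sum>i\<in>UNIV. (Jb x $ i)^2) \<noteq> 0"
proof
  assume "x \<noteq> 0" "(\<Sum>i\<in>UNIV. (Jb x $ i)^2) = 0"
  then have s0: "(x$1)^2 + (x$2)^2 + (x$3)^2 + (x$4)^2 = 0" by (simp add: sum_4 Jb_comp algebra_simps)
  have "(x$1)^2 \<ge> 0" "(x$2)^2 \<ge> 0" "(x$3)^2 \<ge> 0" "(x$4)^2 \<ge> 0" by simp_all
  then have "(x$1)^2 = 0" "(x$2)^2 = 0" "(x$3)^2 = 0" "(x$4)^2 = 0" using s0 by linarith+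
  then have "x = 0" by (simp add: vec_eq_iff forall_4)
  then show False using \<open>x \<noteq> 0\<close> by simp
qed

theorem proposition3:
  fixes mu eps :: real and u :: "real \<Rightarrow> real^4" and I :: "real set"
  assumes "0 < mu" "mu < 1/2" "0 < eps" "eps < 1"
    and "open I" "is_interval I" "0 \<in> I"
    and "\<forall>t\<in>I. u t \<noteq> 0 \<and> KS (u t) \<noteq> vector [-1, 0, 0]"
    and "EL_solution (Lmod mu eps) I u"
    and "bil (u 0) (vector_derivative u (at 0)) = 0"
  shows "EL_solution (Lscript mu eps) I u"
proof -
  define u' where "u' = (\<lambda>s. vector_derivative u (at s))"
  have el1: "\<forall>t\<in>I. u differentiable at t \<and> (\<lambda>s. vector_derivative u (at s)) differentiable at t"
    using assms(9) unfolding EL_solution_def by blast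
  have el2: "\<And>t i. t \<in> I \<Longrightarrow> ((\<lambda>s. pd_v (Lmod mu eps) i (u s) (u' s) s)
        has_real_derivative pd_x (Lmod mu eps) i (u t) (u' t) t) (at t)"
    using assms(9) unfolding EL_solution_def u'_def by blast
  have ud: "\<And>t. t \<in> I \<Longrightarrow> (u has_vector_derivative u' t) (at t)"
    using el1 vector_derivative_works unfolding u'_def by blast
  have nz: "\<And>t. t \<in> I \<Longrightarrow> u t \<noteq> 0" "\<And>t. t \<in> I \<Longrightarrow> KS (u t) \<noteq> vector [-1, 0, 0]"
    using assms(8) by auto
  note kA = key(1)[OF nz] and kB = key(2)[OF nz] and kC = key(3)[OF nz] and kD = key(4)[OF nz]
  define phi where "phi s = (\<Sum>i\<in>UNIV. pd_v (Lmod mu eps) i (u s) (u' s) s * Jb (u s) $ i)" for s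
  define psi where "psi s = 4 * bil (u s) (u' s) * (\<Sum>i\<in>UNIV. (Jb (u s) $ i)^2)" for s
  have phipsi: "phi s = psi s" if "s \<in> I" for s
  proof -
    have "phi s = (\<Sum>i\<in>UNIV. pd_v (Lscript mu eps) i (u s) (u' s) s * Jb (u s) $ i
                   + 4 * bil (u s) (u' s) * (Jb (u s) $ i)^2)"
      unfolding phi_def using kA[OF that that] by (simp add: algebra_simps power2_eq_square)
    also have "\<dots> = psi s"
      using kC[OF that that] by (simp add: sum.distrib psi_def sum_distrib_left)
    finally show ?thesis .
  qed
  have phider: "(phi has_real_derivative 0) (at t)" if "t \<in> I" for t
  proof -
    have jd: "((\<lambda>s. Jb (u s) $ i) has_real_derivative Jb (u' t) $ i) (at t)" for i
      using bounded_linear.has_vector_derivative[OF Jb_bl ud[OF that]]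
      by (simp add: has_real_derivative_iff_has_vector_derivative)
    have "(phi has_real_derivative (\<Sum>i\<in>UNIV. pd_x (Lmod mu eps) i (u t) (u' t) t * Jb (u t) $ i
            + pd_v (Lmod mu eps) i (u t) (u' t) t * Jb (u' t) $ i)) (at t)"
      unfolding phi_def
      by (rule DERIV_sum) (rule DERIV_mult'[OF el2[OF that] jd, THEN DERIV_cong], simp)
    then show ?thesis using kD[OF that that] by simp
  qed
  have psider: "(psi has_real_derivative 0) (at t within I)" if "t \<in> I" for t
    using has_field_derivative_transform_within_open[OF phider[OF that] assms(5) that phipsi]
    by (rule has_field_derivative_at_within)
  obtain c where c: "\<forall>x\<in>I. psi x = c"
    using has_field_derivative_zero_constant[OF is_interval_convex[OF assms(6)] psider] by blast
  have "psi 0 = 0" unfolding psi_def u'_def using assms(10) by simp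
  then have psi0: "\<And>s. s \<in> I \<Longrightarrow> psi s = 0" using c assms(7) by metis
  have bil0: "bil (u s) (u' s) = 0" if "s \<in> I" for s
    using psi0[OF that] Jb_sq[OF nz(1)[OF that]] unfolding psi_def by simp
  show ?thesis unfolding EL_solution_def
  proof (intro conjI ballI allI)
    fix t assume "t \<in> I"
    then show "u differentiable at t" "(\<lambda>s. vector_derivative u (at s)) differentiable at t"
      using el1 by auto
  next
    fix t i assume t: "t \<in> I"
    have "((\<lambda>s. pd_v (Lscript mu eps) i (u s) (u' s) s)
        has_real_derivative pd_x (Lmod mu eps) i (u t) (u' t) t) (at t)"
      by (rule has_field_derivative_transform_within_open[OF el2[OF t] assms(5) t])
         (simp add: kA bil0)
    then show "((\<lambda>s. pd_v (Lscript mu eps) i (u s) (vector_derivative u (at s)) s)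
        has_real_derivative pd_x (Lscript mu eps) i (u t) (vector_derivative u (at t)) t) (at t)"
      using kB[OF t t] bil0[OF t] unfolding u'_def by simp
  qed
qed

end
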